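(* Let $M$ be a unipotent square complex matrix and $k$ a positive integer. Then $F(M)=F(M^k)$, where for a matrix $X$, $F(X)$ denotes the field obtained by adjoining all entries of $X$ to $\mathbb{Q}$.
   Context: A matrix $M$ is unipotent if $M=I+T$ with $T$ nilpotent. *)

theory Defs
  imports "Jordan_Normal_Form.Matrix"
begin

definition nilpotent_mat :: "'a :: semiring_1 mat \<Rightarrow> bool" where
  "nilpotent_mat T \<longleftrightarrow> (\<exists>m. T ^\<^sub>m m = 0\<^sub>m (dim_row T) (dim_col T))"

definition unipotent_mat :: "'a :: ring_1 mat \<Rightarrow> bool" where
  "unipotent_mat M \<longleftrightarrow> (\<exists>T. T \<in> carrier_mat (dim_row M) (dim_row M) \<and>
      nilpotent_mat T \<and> M = 1\<^sub>m (dim_row M) + T)"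

definition is_subfield :: "complex set \<Rightarrow> bool" where
  "is_subfield K \<longleftrightarrow> 0 \<in> K \<and> 1 \<in> K \<and>
     (\<forall>x\<in>K. \<forall>y\<in>K. x + y \<in> K \<and> x * y \<in> K) \<and> (\<forall>x\<in>K. - x \<in> K) \<and>
     (\<forall>x\<in>K. x \<noteq> 0 \<longrightarrow> inverse x \<in> K)"

definition field_adjoin :: "complex set \<Rightarrow> complex set" where
  "field_adjoin S = \<Inter> {K. is_subfield K \<and> S \<subseteq> K}"

definition mat_entries :: "'a mat \<Rightarrow> 'a set" where
  "mat_entries X = {X $$ (i, j) | i j. i < dim_row X \<and> j < dim_col X}"

definition entry_field :: "complex mat \<Rightarrow> complex set" where
  "entry_field X = field_adjoin (mat_entries X)"

end

theory Submission
  imports Defs "HOL-Computational_Algebra.Polynomial"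
begin

fun evl :: "complex mat \<Rightarrow> nat \<Rightarrow> complex list \<Rightarrow> complex mat" where
  "evl T n [] = 0\<^sub>m n n"
| "evl T n (a # as) = a \<cdot>\<^sub>m 1\<^sub>m n + T * evl T n as"

definition ev :: "complex mat \<Rightarrow> nat \<Rightarrow> complex poly \<Rightarrow> complex mat" where
  "ev T n p = evl T n (coeffs p)"

context
  fixes T :: "complex mat" and n :: nat
  assumes T: "T \<in> carrier_mat n n"
begin

lemma evl_carrier: "evl T n as \<in> carrier_mat n n"
  by (induct as) (use T in auto)

lemma ev_carrier[simp]: "ev T n p \<in> carrier_mat n n"
  unfolding ev_def by (rule evl_carrier)

lemma ev_dim[simp]: "dim_row (ev T n p) = n" "dim_col (ev T n p) = n"
  by (rule carrier_matD[OF ev_carrier])+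

lemma ev_0[simp]: "ev T n 0 = 0\<^sub>m n n"
  by (simp add: ev_def)

lemma ev_pCons: "ev T n (pCons a p) = a \<cdot>\<^sub>m 1\<^sub>m n + T * ev T n p"
proof (cases "a = 0 \<and> p = 0")
  case True
  then show ?thesis using T by (auto simp: ev_def intro!: eq_matI)
next
  case False
  then have "coeffs (pCons a p) = a # coeffs p"
    by (auto simp: cCons_def)
  then show ?thesis by (simp add: ev_def)
qed

lemma ev_add: "ev T n (p + q) = ev T n p + ev T n q"
proof (induct p arbitrary: q rule: pCons_induct)
  case 0
  then show ?case by simp
next
  case (pCons a p)
  obtain b q' where q: "q = pCons b q'" by (cases q) auto
  have "ev T n (pCons a p + q) = (a + b) \<cdot>\<^sub>m 1\<^sub>m n + T * (ev T n p + ev T n q')"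
    by (simp add: q ev_pCons pCons.hyps)
  also have "\<dots> = (a + b) \<cdot>\<^sub>m 1\<^sub>m n + (T * ev T n p + T * ev T n q')"
    using mult_add_distrib_mat[OF T ev_carrier ev_carrier] by simp
  also have "\<dots> = (a \<cdot>\<^sub>m 1\<^sub>m n + T * ev T n p) + (b \<cdot>\<^sub>m 1\<^sub>m n + T * ev T n q')"
    using T by (intro eq_matI) (auto simp: algebra_simps)
  finally show ?case by (simp add: q ev_pCons)
qed

lemma ev_smult: "ev T n (smult c p) = c \<cdot>\<^sub>m ev T n p"
proof (induct p rule: pCons_induct)
  case 0
  then show ?case by (auto intro!: eq_matI)
next
  case (pCons a p)
  have "ev T n (smult c (pCons a p)) = (c * a) \<cdot>\<^sub>m 1\<^sub>m n + T * (c \<cdot>\<^sub>m ev T n p)"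
    by (simp add: ev_pCons pCons.hyps)
  also have "\<dots> = (c * a) \<cdot>\<^sub>m 1\<^sub>m n + c \<cdot>\<^sub>m (T * ev T n p)"
    using mult_smult_distrib[OF T ev_carrier] by simp
  also have "\<dots> = c \<cdot>\<^sub>m (a \<cdot>\<^sub>m 1\<^sub>m n + T * ev T n p)"
    using T by (intro eq_matI) (auto simp: algebra_simps)
  finally show ?case by (simp add: ev_pCons)
qed

lemma ev_mult: "ev T n (p * q) = ev T n p * ev T n q"
proof (induct p rule: pCons_induct)
  case 0
  then show ?case using left_mult_zero_mat[OF ev_carrier] by simp
next
  case (pCons a p)
  have "ev T n (pCons a p * q) = a \<cdot>\<^sub>m ev T n q + (0 \<cdot>\<^sub>m 1\<^sub>m n + T * (ev T n p * ev T n q))"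
    by (simp add: ev_pCons ev_add ev_smult pCons.hyps)
  also have "\<dots> = a \<cdot>\<^sub>m ev T n q + T * ev T n p * ev T n q"
    using T by (subst assoc_mult_mat[of T n n _ n _ n]) (auto intro!: eq_matI)
  also have "\<dots> = (a \<cdot>\<^sub>m 1\<^sub>m n + T * ev T n p) * ev T n q"
    using T add_mult_distrib_mat[of "a \<cdot>\<^sub>m 1\<^sub>m n" n n "T * ev T n p" "ev T n q" n]
      mult_smult_assoc_mat[of "1\<^sub>m n" n n "ev T n q" n a] by simp
  finally show ?case by (simp add: ev_pCons)
qed

lemma ev_1[simp]: "ev T n 1 = 1\<^sub>m n"
  using T by (auto simp: one_pCons ev_pCons intro!: eq_matI)

lemma ev_x[simp]: "ev T n [:0, 1:] = T"
  using T by (auto simp: ev_pCons intro!: eq_matI)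

lemma ev_pow: "ev T n (p ^ r) = ev T n p ^\<^sub>m r"
proof (induct r)
  case (Suc r)
  have "ev T n (p ^ Suc r) = ev T n (p ^ r * p)" by (simp only: power_Suc2)
  then show ?case by (simp add: ev_mult Suc)
qed simp

end

lemma subfield_sum:
  assumes K: "is_subfield K" and "finite A" shows "(\<forall>x\<in>A. f x \<in> K) \<Longrightarrow> sum f A \<in> K"
  using assms(2) by (induct A rule: finite_induct) (use K in \<open>auto simp: is_subfield_def\<close>)

lemma subfield_nat: assumes K: "is_subfield K" shows "of_nat m \<in> K"
  by (induct m) (use K in \<open>auto simp: is_subfield_def\<close>)

lemma subfield_diff: assumes K: "is_subfield K" "x \<in> K" "y \<in> K" shows "x - y \<in> K"
  using K unfolding is_subfield_def by (metis diff_conv_add_uminus)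

lemma subfield_divide: assumes K: "is_subfield K" "x \<in> K" "y \<in> K" shows "x / y \<in> K"
  using K unfolding is_subfield_def
  by (metis divide_inverse inverse_zero mult_zero_right)

definition Cm :: "complex set \<Rightarrow> nat \<Rightarrow> complex mat \<Rightarrow> bool" where
  "Cm K n X \<longleftrightarrow> X \<in> carrier_mat n n \<and> (\<forall>i<n. \<forall>j<n. X $$ (i,j) \<in> K)"

lemma Cm_mult: assumes K: "is_subfield K" and "Cm K n X" "Cm K n Y" shows "Cm K n (X * Y)"
proof -
  have X: "X \<in> carrier_mat n n" and Y: "Y \<in> carrier_mat n n"
    and XK: "\<And>i j. i < n \<Longrightarrow> j < n \<Longrightarrow> X $$ (i,j) \<in> K"
    and YK: "\<And>i j. i < n \<Longrightarrow> j < n \<Longrightarrow> Y $$ (i,j) \<in> K"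
    using assms(2,3) unfolding Cm_def by auto
  have mul: "\<And>x y. x \<in> K \<Longrightarrow> y \<in> K \<Longrightarrow> x * y \<in> K" using K unfolding is_subfield_def by auto
  have "(X * Y) $$ (i,j) \<in> K" if "i < n" "j < n" for i j
  proof -
    have "(X * Y) $$ (i,j) = (\<Sum>l\<in>{0..<n}. X $$ (i,l) * Y $$ (l,j))"
      using X Y that by (simp add: scalar_prod_def)
    also have "\<dots> \<in> K"
      by (rule subfield_sum[OF K]) (use that XK YK mul in auto)
    finally show ?thesis .
  qed
  then show ?thesis using X Y unfolding Cm_def by auto
qed

lemma Cm_one: assumes K: "is_subfield K" shows "Cm K n (1\<^sub>m n)"
  using K unfolding Cm_def is_subfield_def by auto

lemma Cm_pow: assumes K: "is_subfield K" and X: "Cm K n X" shows "Cm K n (X ^\<^sub>m r)"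
proof (induct r)
  case 0
  then show ?case using X Cm_one[OF K] by (auto simp: Cm_def)
next
  case (Suc r)
  then show ?case using Cm_mult[OF K Suc X] by simp
qed

lemma Cm_add: assumes K: "is_subfield K" and "Cm K n X" "Cm K n Y" shows "Cm K n (X + Y)"
  using assms(2,3) K unfolding Cm_def is_subfield_def by auto

lemma Cm_smult: assumes K: "is_subfield K" and "Cm K n X" "a \<in> K" shows "Cm K n (a \<cdot>\<^sub>m X)"
  using assms(2,3) K unfolding Cm_def is_subfield_def by auto

lemma Cm_zero: assumes K: "is_subfield K" shows "Cm K n (0\<^sub>m n n)"
  using K unfolding Cm_def is_subfield_def by auto

definition polyK :: "complex set \<Rightarrow> complex poly \<Rightarrow> bool" where
  "polyK K p \<longleftrightarrow> (\<forall>i. coeff p i \<in> K)"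

lemma polyK_add: assumes K: "is_subfield K" "polyK K p" "polyK K q" shows "polyK K (p + q)"
  using K unfolding polyK_def is_subfield_def by auto

lemma polyK_mult: assumes K: "is_subfield K" "polyK K p" "polyK K q" shows "polyK K (p * q)"
proof -
  have mul: "\<And>x y. x \<in> K \<Longrightarrow> y \<in> K \<Longrightarrow> x * y \<in> K" using K unfolding is_subfield_def by auto
  show ?thesis unfolding polyK_def coeff_mult
    by (intro allI subfield_sum[OF K(1)]) (use K mul in \<open>auto simp: polyK_def\<close>)
qed

lemma polyK_nat: assumes K: "is_subfield K" shows "polyK K (of_nat c)"
  using K subfield_nat[OF K] unfolding polyK_def is_subfield_def
  by (simp add: of_nat_poly coeff_pCons split: nat.splits)

lemma polyK_x: assumes K: "is_subfield K" shows "polyK K [:0,1:]"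
  using K unfolding polyK_def is_subfield_def by (auto simp: coeff_pCons split: nat.splits)

lemma pCons_decomp: "pCons a p = smult a 1 + [:0, 1:] * p"
  by (simp add: one_pCons)

lemma key:
  assumes K: "is_subfield K" and T: "T \<in> carrier_mat n n"
  shows "polyK K p \<Longrightarrow> (\<forall>j>r. Cm K n (T ^\<^sub>m j)) \<Longrightarrow> Cm K n (ev T n ([:0,1:] ^ Suc r * p))"
proof (induct p arbitrary: r rule: pCons_induct)
  case 0
  then show ?case using Cm_zero[OF K] by (simp add: ev_0[OF T])
next
  case (pCons a p)
  have pK: "polyK K p" using pCons.prems(1) unfolding polyK_def
    by (metis coeff_pCons_Suc)
  have aK: "a \<in> K" using pCons.prems(1) unfolding polyK_def
    by (metis coeff_pCons_0)
  have eq: "[:0,1:] ^ Suc r * pCons a p = smult a ([:0,1:] ^ Suc r) + [:0,1:] ^ Suc (Suc r) * p"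
    by (subst pCons_decomp[of a p]) (simp only: distrib_left mult_smult_right mult_smult_left mult_1_left mult_1_right power_Suc mult_ac)
  have h: "\<forall>j>Suc r. Cm K n (T ^\<^sub>m j)" using pCons.prems(2) by auto
  have "Cm K n (ev T n ([:0,1:] ^ Suc (Suc r) * p))"
    by (rule pCons.hyps(2)[OF pK h])
  moreover have "Cm K n (a \<cdot>\<^sub>m ev T n ([:0,1:] ^ Suc r))"
    unfolding ev_pow[OF T] ev_x[OF T] using Cm_smult[OF K _ aK] pCons.prems(2) by blast
  ultimately show ?case unfolding eq ev_add[OF T] ev_smult[OF T] using Cm_add[OF K] by blast
qed


lemma fa_subfield: "is_subfield (field_adjoin S)"
  unfolding field_adjoin_def is_subfield_def by auto

lemma fa_incl: "S \<subseteq> field_adjoin S"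
  unfolding field_adjoin_def by auto

lemma fa_min: "is_subfield K \<Longrightarrow> S \<subseteq> K \<Longrightarrow> field_adjoin S \<subseteq> K"
  unfolding field_adjoin_def by auto

lemma Cm_entries: "X \<in> carrier_mat n n \<Longrightarrow> Cm K n X \<longleftrightarrow> mat_entries X \<subseteq> K"
  unfolding Cm_def mat_entries_def by auto

lemma of_nat_poly_pow: "(of_nat k :: complex poly) ^ r = [:of_nat k ^ r:]"
  by (induct r) (simp_all add: of_nat_poly)

lemma alg1: "(1 + x * (of_nat k + x * V)) * (1 + x) =
  1 + x * (of_nat (Suc k) + x * (V + of_nat k + x * V))" for x V :: "'a :: comm_ring_1"
  by (simp add: algebra_simps)

lemma alg2: "(c ^ r + x * W) * (c + x * V) = c ^ Suc r + x * (c ^ r * V + c * W + x * W * V)"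
  for x V W c :: "'a :: comm_ring_1"
  by (simp add: algebra_simps)

lemma binom_V: assumes K: "is_subfield K"
  shows "\<exists>V. polyK K V \<and> (1 + [:0,1:]) ^ k = 1 + [:0,1:] * (of_nat k + [:0,1:] * V)"
proof (induct k)
  case 0
  show ?case by (rule exI[of _ 0]) (simp add: polyK_def K[unfolded is_subfield_def])
next
  case (Suc k)
  then obtain V where V: "polyK K V" "(1 + [:0,1:]) ^ k = 1 + [:0,1:] * (of_nat k + [:0,1:] * V)"
    by blast
  show ?case
  proof (intro exI conjI)
    show "polyK K (V + of_nat k + [:0,1:] * V)"
      by (intro polyK_add polyK_mult polyK_nat polyK_x K V)
    have "(1 + [:0,1:]) ^ Suc k = (1 + [:0,1:]) ^ k * (1 + [:0,1:])" by (simp only: power_Suc2)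
    also have "\<dots> = 1 + [:0,1:] * (of_nat (Suc k) + [:0,1:] * (V + of_nat k + [:0,1:] * V))"
      unfolding V(2) by (rule alg1)
    finally show "(1 + [:0,1:]) ^ Suc k = 1 + [:0,1:] * (of_nat (Suc k) + [:0,1:] * (V + of_nat k + [:0,1:] * V))" .
  qed
qed

lemma U_pow: assumes K: "is_subfield K" and V: "polyK K V"
  shows "\<exists>W. polyK K W \<and> (of_nat k + [:0,1:] * V) ^ r = of_nat k ^ r + [:0,1:] * W"
proof (induct r)
  case 0
  show ?case by (rule exI[of _ 0]) (simp add: polyK_def K[unfolded is_subfield_def])
next
  case (Suc r)
  then obtain W where W: "polyK K W" "(of_nat k + [:0,1:] * V) ^ r = of_nat k ^ r + [:0,1:] * W"
    by blast
  show ?case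
  proof (intro exI conjI)
    show "polyK K (of_nat k ^ r * V + of_nat k * W + [:0,1:] * W * V)"
      unfolding of_nat_power[symmetric]
      by (intro polyK_add polyK_mult polyK_nat polyK_x K V W)
    have "(of_nat k + [:0,1:] * V) ^ Suc r = (of_nat k + [:0,1:] * V) ^ r * (of_nat k + [:0,1:] * V)"
      by (simp only: power_Suc2)
    also have "\<dots> = of_nat k ^ Suc r + [:0,1:] * (of_nat k ^ r * V + of_nat k * W + [:0,1:] * W * V)"
      unfolding W(2) by (rule alg2)
    finally show "(of_nat k + [:0,1:] * V) ^ Suc r = of_nat k ^ Suc r + [:0,1:] * (of_nat k ^ r * V + of_nat k * W + [:0,1:] * W * V)" .
  qed
qed


theorem lemma7p6:
  fixes M :: "complex mat" and n k :: nat
  assumes "M \<in> carrier_mat n n"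
    and "unipotent_mat M"
    and "k > 0"
  shows "entry_field M = entry_field (M ^\<^sub>m k)"
proof -
  have Mc: "M \<in> carrier_mat n n" by fact
  then have dM: "dim_row M = n" by auto
  obtain T where T: "T \<in> carrier_mat n n" and nil: "nilpotent_mat T" and MT: "M = 1\<^sub>m n + T"
    using assms(2) unfolding unipotent_mat_def dM by blast
  obtain m where Tm: "T ^\<^sub>m m = 0\<^sub>m n n"
    using nil T unfolding nilpotent_mat_def by auto
  define x :: "complex poly" where "x = [:0,1:]"
  have evx: "ev T n x = T" unfolding x_def by (rule ev_x[OF T])
  have evM: "ev T n (1 + x) = M" unfolding ev_add[OF T] ev_1[OF T] evx MT ..
  have Mkc: "M ^\<^sub>m k \<in> carrier_mat n n" using Mc by simp
  have A: "entry_field (M ^\<^sub>m k) \<subseteq> entry_field M"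
  proof -
    let ?K = "field_adjoin (mat_entries M)"
    have K: "is_subfield ?K" by (rule fa_subfield)
    have "Cm ?K n M" using Cm_entries[OF Mc] fa_incl by blast
    then have "Cm ?K n (M ^\<^sub>m k)" by (rule Cm_pow[OF K])
    then have "mat_entries (M ^\<^sub>m k) \<subseteq> ?K" using Cm_entries[OF Mkc] by blast
    then show ?thesis unfolding entry_field_def by (rule fa_min[OF K])
  qed
  have B: "mat_entries M \<subseteq> K" if K: "is_subfield K" and MkK: "mat_entries (M ^\<^sub>m k) \<subseteq> K" for K
  proof -
    have CMk: "Cm K n (M ^\<^sub>m k)" using Cm_entries[OF Mkc] MkK by blast
    obtain V where V: "polyK K V" "(1 + x) ^ k = 1 + x * (of_nat k + x * V)"
      using binom_V[OF K, of k] unfolding x_def by blast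
    define U where "U = of_nat k + x * V"
    define N where "N = ev T n (x * U)"
    have Nc: "N \<in> carrier_mat n n" unfolding N_def by (rule ev_carrier[OF T])
    have "M ^\<^sub>m k = ev T n ((1 + x) ^ k)" by (simp only: ev_pow[OF T] evM)
    also have "\<dots> = ev T n (1 + x * U)" by (simp only: V(2) U_def)
    also have "\<dots> = 1\<^sub>m n + N" by (simp only: N_def ev_add[OF T] ev_1[OF T])
    finally have MkN: "M ^\<^sub>m k = 1\<^sub>m n + N" .
    have CN: "Cm K n N"
      unfolding Cm_def
    proof (intro conjI allI impI Nc)
      fix i j assume ij: "i < n" "j < n"
      have "N $$ (i,j) = (M ^\<^sub>m k) $$ (i,j) - 1\<^sub>m n $$ (i,j)"
        unfolding MkN using ij Nc by simp
      also have "\<dots> \<in> K"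
        using CMk ij subfield_diff[OF K] Cm_one[OF K, of n] unfolding Cm_def by blast
      finally show "N $$ (i,j) \<in> K" .
    qed
    have zero: "Cm K n (T ^\<^sub>m j)" if "m \<le> j" for j
    proof -
      have xj: "x ^ m * x ^ (j - m) = x ^ j" using that by (simp add: power_add[symmetric])
      have "T ^\<^sub>m j = ev T n (x ^ m * x ^ (j - m))"
        unfolding xj ev_pow[OF T] evx ..
      also have "\<dots> = 0\<^sub>m n n"
        unfolding ev_mult[OF T] ev_pow[OF T] evx Tm
        by (rule left_mult_zero_mat) (use T in simp)
      finally show ?thesis using Cm_zero[OF K] by simp
    qed
    have step: "Cm K n (T ^\<^sub>m r)" if hyp: "\<forall>j>r. Cm K n (T ^\<^sub>m j)" for r
    proof -
      obtain W where W: "polyK K W" "U ^ r = of_nat k ^ r + x * W"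
        using U_pow[OF K V(1), of k r] unfolding U_def x_def by blast
      define E where "E = ev T n (x ^ Suc r * W)"
      have CE: "Cm K n E" unfolding E_def x_def by (rule key[OF K T W(1) hyp])
      have Ec: "E \<in> carrier_mat n n" unfolding E_def by (rule ev_carrier[OF T])
      have "(x * U) ^ r = smult (of_nat k ^ r) (x ^ r) + x ^ Suc r * W"
        unfolding power_mult_distrib W(2) by (simp add: algebra_simps of_nat_poly_pow)
      then have NrE: "N ^\<^sub>m r = (of_nat k ^ r) \<cdot>\<^sub>m T ^\<^sub>m r + E"
        unfolding N_def E_def ev_pow[OF T, symmetric]
        by (simp only: ev_add[OF T] ev_smult[OF T] ev_pow[OF T] evx)
      have CNr: "Cm K n (N ^\<^sub>m r)" by (rule Cm_pow[OF K CN])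
      have kK: "of_nat k ^ r \<in> K" using subfield_nat[OF K, of "k ^ r"] by simp
      have k0: "(of_nat k ^ r :: complex) \<noteq> 0" using assms(3) by simp
      show ?thesis unfolding Cm_def
      proof (intro conjI allI impI)
        show "T ^\<^sub>m r \<in> carrier_mat n n" using T by simp
        fix i j assume ij: "i < n" "j < n"
        have "(N ^\<^sub>m r) $$ (i,j) = of_nat k ^ r * (T ^\<^sub>m r) $$ (i,j) + E $$ (i,j)"
          unfolding NrE using ij T Ec by simp
        then have "(T ^\<^sub>m r) $$ (i,j) = ((N ^\<^sub>m r) $$ (i,j) - E $$ (i,j)) / of_nat k ^ r"
          using k0 by (simp add: field_simps)
        also have "\<dots> \<in> K"
          using CNr CE ij kK subfield_diff[OF K] subfield_divide[OF K] unfolding Cm_def by blast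
        finally show "(T ^\<^sub>m r) $$ (i,j) \<in> K" .
      qed
    qed
    have down: "\<forall>j. m \<le> j + d \<longrightarrow> Cm K n (T ^\<^sub>m j)" for d
    proof (induct d)
      case 0
      then show ?case using zero by simp
    next
      case (Suc d)
      show ?case
      proof (intro allI impI)
        fix j assume "m \<le> j + Suc d"
        then have "\<forall>j'>j. Cm K n (T ^\<^sub>m j')" using Suc by auto
        then show "Cm K n (T ^\<^sub>m j)" by (rule step)
      qed
    qed
    have "\<forall>j. Cm K n (T ^\<^sub>m j)" using down[of m] by auto
    then have "Cm K n (T ^\<^sub>m 1)" by blast
    moreover have "T ^\<^sub>m 1 = T" using T by simp
    ultimately have CT: "Cm K n T" by simp
    have "Cm K n M" unfolding MT by (rule Cm_add[OF K Cm_one[OF K] CT])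
    then show ?thesis using Cm_entries[OF Mc] by blast
  qed
  have "mat_entries M \<subseteq> entry_field (M ^\<^sub>m k)"
    unfolding entry_field_def field_adjoin_def using B by blast
  then have "entry_field M \<subseteq> entry_field (M ^\<^sub>m k)"
    unfolding entry_field_def by (rule fa_min[OF fa_subfield, folded entry_field_def, unfolded entry_field_def])
  with A show ?thesis by blast
qed

end
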